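(* Suppose $\beta>1$ and $T<\infty$. If $(a_n)$ satisfies $n^{1/2}/a_n\to0$, then \[\sup_{t\le T}\Big|\sum_{j=2}^{\lfloor nt\rfloor}\frac{\chi_j^-}{a_n}\Big|\] converges in probability to $0$ as $n\to\infty$.
   Context: Let $(Y_k)_{k\ge0}$ be a random walk on $\mathbb{Z}$ with $Y_0=0$ stepping to $y-1$ with probability $1/(\beta+1)$ and to $y+1$ with probability $\beta/(\beta+1)$. Let $\upsilon_\beta=(\beta-1)/(\beta+1)$. Regeneration times: $\zeta^Y_0=0$ and for $j\ge1$, $\zeta^Y_j:=\inf\{m>\zeta^Y_{j-1}:\{Y_r\}_{r=0}^{m-1}\cap\{Y_r\}_{r=m}^\infty=\emptyset\}$; regeneration points $\varrho_j:=Y_{\zeta^Y_j}$ (with $\varrho_0=0$). Define $\chi^-_j:=\upsilon_\beta(\zeta^Y_j-\zeta^Y_{j-1})-(\varrho_j-\varrho_{j-1})$. *)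

theory Defs
  imports "HOL-Probability.Probability"
begin

definition walk :: "(nat \<Rightarrow> 'a \<Rightarrow> int) \<Rightarrow> 'a \<Rightarrow> nat \<Rightarrow> int" where
  "walk X \<omega> m = (\<Sum>k<m. X k \<omega>)"

definition is_regen :: "(nat \<Rightarrow> int) \<Rightarrow> nat \<Rightarrow> bool" where
  "is_regen Y m \<longleftrightarrow> Y ` {..<m} \<inter> Y ` {m..} = {}"

text \<open>Regeneration times zeta_j (Inf of the empty set of naturals is 0 in Isabelle).\<close>
fun regen_time :: "(nat \<Rightarrow> int) \<Rightarrow> nat \<Rightarrow> nat" where
  "regen_time Y 0 = 0"
| "regen_time Y (Suc j) = Inf {m. regen_time Y j < m \<and> is_regen Y m}"

definition regen_point :: "(nat \<Rightarrow> int) \<Rightarrow> nat \<Rightarrow> int" where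
  "regen_point Y j = Y (regen_time Y j)"

definition upsilon :: "real \<Rightarrow> real" where
  "upsilon \<beta> = (\<beta> - 1) / (\<beta> + 1)"

definition chi_minus :: "real \<Rightarrow> (nat \<Rightarrow> int) \<Rightarrow> nat \<Rightarrow> real" where
  "chi_minus \<beta> Y j =
     upsilon \<beta> * (real (regen_time Y j) - real (regen_time Y (j - 1)))
     - real_of_int (regen_point Y j - regen_point Y (j - 1))"

end

theory Submission
  imports Defs
begin


lemma walk_split:
  fixes Xs :: "nat \<Rightarrow> int"
  assumes "a \<le> b"
  shows "(\<Sum>k<b. Xs k) = (\<Sum>k<a. Xs k) + (\<Sum>k\<in>{a..<b}. Xs k)"
proof -
  have "{..<b} = {..<a} \<union> {a..<b}" using assms by auto
  then show ?thesis by (simp add: sum.union_disjoint[of "{..<a}" "{a..<b}"] ivl_disj_int)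
qed

lemma walk_up:
  fixes Xs :: "nat \<Rightarrow> int"
  assumes "\<forall>i\<in>{s..<s+n}. Xs i = 1" "i \<le> n"
  shows "(\<Sum>k<s+i. Xs k) = (\<Sum>k<s. Xs k) + int i"
  using assms(2)
proof (induction i)
  case 0 then show ?case by simp
next
  case (Suc i)
  then have "Xs (s+i) = 1" using assms(1) by auto
  with Suc show ?case by simp
qed

lemma regen_window:
  fixes Xs :: "nat \<Rightarrow> int"
  defines "Y \<equiv> \<lambda>m. \<Sum>k<m. Xs k"
  assumes win: "\<forall>i\<in>{s..<s+2*J}. Xs i = 1"
    and past: "\<forall>r<s. (\<Sum>i\<in>{r..<s}. Xs i) > - int J"
    and fut: "\<forall>r>s+2*J. (\<Sum>i\<in>{s+2*J..<r}. Xs i) > - int J"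
  shows "is_regen Y (s+J)"
proof -
  have Ys: "Y (s+i) = Y s + int i" if "i \<le> 2*J" for i
    unfolding Y_def using walk_up[OF win that] .
  have lt: "Y r < Y s + int J" if "r < s + J" for r
  proof (cases "r < s")
    case True
    have "Y s = Y r + (\<Sum>i\<in>{r..<s}. Xs i)" unfolding Y_def using True by (intro walk_split) auto
    with past True show ?thesis by force
  next
    case False
    define i where "i = r - s"
    have "r = s + i" "i < J" using that False by (auto simp: i_def)
    then show ?thesis using Ys[of i] by simp
  qed
  have ge: "Y r \<ge> Y s + int J" if "r \<ge> s + J" for r
  proof (cases "r > s + 2*J")
    case True
    have "Y r = Y (s+2*J) + (\<Sum>i\<in>{s+2*J..<r}. Xs i)" unfolding Y_def using True by (intro walk_split) auto
    with fut True Ys[of "2*J"] show ?thesis by force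
  next
    case False
    define i where "i = r - s"
    have "r = s + i" "J \<le> i" "i \<le> 2*J" using that False by (auto simp: i_def)
    then show ?thesis using Ys[of i] by simp
  qed
  show ?thesis unfolding is_regen_def
  proof (rule ccontr)
    assume "Y ` {..<s+J} \<inter> Y ` {s+J..} \<noteq> {}"
    then obtain r r' where "r < s+J" "r' \<ge> s+J" "Y r = Y r'" by auto
    with lt[of r] ge[of r'] show False by simp
  qed
qed

lemma regen_time_bound:
  fixes Y :: "nat \<Rightarrow> int"
  assumes "j \<le> card {m\<in>{1..M}. is_regen Y m}"
  shows "regen_time Y j \<le> M \<and> card {m\<in>{1..M}. is_regen Y m \<and> m \<le> regen_time Y j} = j"
  using assms
proof (induction j)
  case 0
  have "{m\<in>{1..M}. is_regen Y m \<and> m \<le> 0} = {}" by auto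
  then show ?case by simp
next
  case (Suc j)
  define Rs where "Rs = {m\<in>{1..M}. is_regen Y m}"
  define C where "C = (\<lambda>z. {m\<in>{1..M}. is_regen Y m \<and> m \<le> z})"
  define z0 where "z0 = regen_time Y j"
  define z1 where "z1 = regen_time Y (Suc j)"
  from Suc have IH: "z0 \<le> M" "card (C z0) = j" by (auto simp: z0_def C_def Rs_def)
  have sub: "C z0 \<subseteq> Rs" unfolding C_def Rs_def by blast
  have finR: "finite Rs" unfolding Rs_def by simp
  have lt: "card (C z0) < card Rs" using IH Suc.prems unfolding Rs_def by simp
  have "\<not> Rs \<subseteq> C z0"
  proof
    assume "Rs \<subseteq> C z0"
    then have "Rs = C z0" using sub by blast
    then show False using lt by simp
  qed
  then obtain m where "m \<in> Rs" "m \<notin> C z0" by blast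
  then have m: "m \<le> M" "is_regen Y m" "m > z0" unfolding Rs_def C_def by auto
  define S where "S = {m. z0 < m \<and> is_regen Y m}"
  have z: "z1 = (LEAST m. m \<in> S)" by (simp add: Inf_nat_def z1_def z0_def S_def)
  have mS: "m \<in> S" using m unfolding S_def by blast
  have zS: "z1 \<in> S" unfolding z by (rule LeastI[of _ m]) (rule mS)
  have zmin: "z1 \<le> m'" if "m' \<in> S" for m' unfolding z by (rule Least_le) (rule that)
  have zM: "z1 \<le> M" using zmin[OF mS] m(1) by linarith
  have z1pos: "z1 \<ge> 1" using zS unfolding S_def by simp
  have "C z1 = insert z1 (C z0)"
  proof (intro set_eqI iffI)
    fix x assume x: "x \<in> C z1"
    show "x \<in> insert z1 (C z0)"
    proof (cases "x \<le> z0")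
      case False
      then have "x \<in> S" using x unfolding S_def C_def by simp
      then have "z1 \<le> x" by (rule zmin)
      then show ?thesis using x unfolding C_def by simp
    next
      case True
      then show ?thesis using x unfolding C_def by simp
    qed
  next
    fix x assume x: "x \<in> insert z1 (C z0)"
    have "z0 \<le> z1" using zS unfolding S_def by simp
    moreover have "is_regen Y z1" using zS unfolding S_def by simp
    ultimately show "x \<in> C z1" using x zM z1pos unfolding C_def by auto
  qed
  moreover have "z1 \<notin> C z0" using zS unfolding S_def C_def by simp
  moreover have "finite (C z0)" unfolding C_def by simp
  ultimately have "card (C z1) = Suc j" using IH by simp
  then show ?case using zM unfolding C_def z1_def by simp
qed

lemma chi_telescope:
  fixes Y :: "nat \<Rightarrow> int" and \<beta> :: real
  defines "D \<equiv> \<lambda>m. upsilon \<beta> * real m - real_of_int (Y m)"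
  assumes "K \<ge> 1"
  shows "(\<Sum>j\<in>{2..K}. chi_minus \<beta> Y j) = D (regen_time Y K) - D (regen_time Y 1)"
  using assms(2)
proof (induction K rule: dec_induct)
  case base then show ?case by simp
next
  case (step K)
  have "{2..Suc K} = insert (Suc K) {2..K}" using step by auto
  then have "(\<Sum>j\<in>{2..Suc K}. chi_minus \<beta> Y j) = chi_minus \<beta> Y (Suc K) + (\<Sum>j\<in>{2..K}. chi_minus \<beta> Y j)"
    by simp
  moreover have "chi_minus \<beta> Y (Suc K) = D (regen_time Y (Suc K)) - D (regen_time Y K)"
    by (simp add: chi_minus_def D_def regen_point_def right_diff_distrib)
  ultimately show ?case using step.IH by linarith
qed

lemma pathwise:
  fixes Y :: "nat \<Rightarrow> int" and a :: real
  assumes card: "nat \<lfloor>real n * T\<rfloor> \<le> card {m\<in>{1..M}. is_regen Y m}"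
    and small: "\<forall>m\<le>M. \<bar>real_of_int (Y m) - upsilon \<beta> * real m\<bar> < \<epsilon> * \<bar>a\<bar> / 2"
    and a: "a \<noteq> 0" and T: "0 \<le> T" and e: "\<epsilon> > 0"
  shows "(SUP t\<in>{0..T}. \<bar>\<Sum>j\<in>{2..nat \<lfloor>real n * t\<rfloor>}. chi_minus \<beta> Y j / a\<bar>) \<le> \<epsilon>"
proof (rule cSUP_least)
  show "{0..T} \<noteq> {}" using T by simp
  fix t assume t: "t \<in> {0..T}"
  define K where "K = nat \<lfloor>real n * t\<rfloor>"
  have KT: "K \<le> nat \<lfloor>real n * T\<rfloor>" unfolding K_def using t
    by (intro nat_mono floor_mono mult_left_mono) auto
  show "\<bar>\<Sum>j\<in>{2..nat \<lfloor>real n * t\<rfloor>}. chi_minus \<beta> Y j / a\<bar> \<le> \<epsilon>"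
  proof (cases "K \<ge> 2")
    case False
    then have "{2..nat \<lfloor>real n * t\<rfloor>} = {}" unfolding K_def by auto
    then show ?thesis using e by simp
  next
    case True
    define D where "D = (\<lambda>m. upsilon \<beta> * real m - real_of_int (Y m))"
    have b1: "regen_time Y K \<le> M" using regen_time_bound[where j=K and Y=Y and M=M] KT card by auto
    have b2: "regen_time Y 1 \<le> M" using regen_time_bound[where j=1 and Y=Y and M=M] KT card True by auto
    have Db: "\<bar>D m\<bar> < \<epsilon> * \<bar>a\<bar> / 2" if "m \<le> M" for m
      using small that unfolding D_def by (simp add: abs_minus_commute)
    have "(\<Sum>j\<in>{2..K}. chi_minus \<beta> Y j) = D (regen_time Y K) - D (regen_time Y 1)"
      unfolding D_def using True by (intro chi_telescope) auto
    then have "\<bar>\<Sum>j\<in>{2..K}. chi_minus \<beta> Y j\<bar> < \<epsilon> * \<bar>a\<bar>"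
      using Db[OF b1] Db[OF b2] by linarith
    then have "\<bar>(\<Sum>j\<in>{2..K}. chi_minus \<beta> Y j) / a\<bar> \<le> \<epsilon>"
      using a by (simp add: abs_divide divide_le_eq)
    then show ?thesis unfolding K_def by (simp add: sum_divide_distrib)
  qed
qed



locale rwalk = prob_space M for M :: "'a measure" +
  fixes X :: "nat \<Rightarrow> 'a \<Rightarrow> int" and \<beta> :: real
  assumes measX[measurable]: "\<And>k. X k \<in> measurable M (count_space UNIV)"
  and indepX: "indep_vars (\<lambda>_. count_space UNIV) X UNIV"
  and up: "\<And>k. measure M {\<omega> \<in> space M. X k \<omega> = 1} = \<beta> / (\<beta> + 1)"
  and down: "\<And>k. measure M {\<omega> \<in> space M. X k \<omega> = -1} = 1 / (\<beta> + 1)"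
  and beta: "\<beta> > 1"
begin

definition "R k \<omega> = real_of_int (X k \<omega>)"
abbreviation "\<upsilon> \<equiv> upsilon \<beta>"

lemma measR[measurable]: "R k \<in> borel_measurable M"
  unfolding R_def by measurable

lemma ups: "0 < \<upsilon>" "\<upsilon> < 1"
  using beta by (auto simp: upsilon_def field_simps)

lemma AE_pm: "AE \<omega> in M. X k \<omega> = 1 \<or> X k \<omega> = -1"
proof -
  let ?A = "{\<omega> \<in> space M. X k \<omega> = 1}" and ?B = "{\<omega> \<in> space M. X k \<omega> = -1}"
  have "prob (?A \<union> ?B) = prob ?A + prob ?B"
    by (intro finite_measure_Union) auto
  also have "\<dots> = \<beta>/(\<beta>+1) + 1/(\<beta>+1)" by (simp add: up down)
  also have "\<dots> = 1" using beta by (simp add: field_simps)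
  finally have "prob (?A \<union> ?B) = 1" .
  then have "AE \<omega> in M. \<omega> \<in> ?A \<union> ?B"
    by (intro AE_prob_1) auto
  then show ?thesis by auto
qed

lemma AE_R: "AE \<omega> in M. R k \<omega> \<in> {-1..1}"
  using AE_pm[of k] by eventually_elim (auto simp: R_def)

lemma intR: "integrable M (R k)"
proof -
  have "AE \<omega> in M. norm (R k \<omega>) \<le> 1" using AE_R[of k] by eventually_elim auto
  then show ?thesis by (intro integrable_const_bound[where B=1]) auto
qed

lemma expR: "expectation (R k) = \<upsilon>"
proof -
  have "expectation (R k) = expectation (\<lambda>\<omega>. indicator {\<omega> \<in> space M. X k \<omega> = 1} \<omega> - indicator {\<omega> \<in> space M. X k \<omega> = -1} \<omega>)"
  proof (intro integral_cong_AE)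
    show "AE \<omega> in M. R k \<omega> = indicator {\<omega> \<in> space M. X k \<omega> = 1} \<omega> - indicator {\<omega> \<in> space M. X k \<omega> = -1} \<omega>"
      using AE_pm[of k] AE_space by eventually_elim (auto simp: R_def)
  qed auto
  also have "\<dots> = \<beta> / (\<beta> + 1) - 1 / (\<beta> + 1)"
    by (subst Bochner_Integration.integral_diff) (auto simp: up down emeasure_eq_measure intro!: integrable_real_indicator)
  also have "\<dots> = \<upsilon>" by (simp add: upsilon_def diff_divide_distrib)
  finally show ?thesis .
qed

lemma indepR: "indep_vars (\<lambda>_. borel) R UNIV"
  unfolding R_def by (rule indep_vars_compose2[OF indepX]) auto

lemma hoeff:
  assumes d: "d > 0" and J: "J \<ge> 0"
  shows "prob {\<omega>\<in>space M. (\<Sum>i\<in>{r..<r+d}. R i \<omega>) \<le> -J} \<le> exp (-J*\<upsilon>) * exp (-\<upsilon>\<^sup>2/2) ^ d"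
proof -
  interpret H: Hoeffding_ineq M "{r..<r+d}" R "\<lambda>_. -1" "\<lambda>_. 1" "\<Sum>i\<in>{r..<r+d}. expectation (R i)"
  proof unfold_locales
    show "indep_vars (\<lambda>_. borel) R {r..<r+d}" using indepR by (rule indep_vars_subset) auto
    fix i show "AE x in M. R i x \<in> {-1..1}" using AE_R[of i] by simp
  qed auto
  have mu: "(\<Sum>i\<in>{r..<r+d}. expectation (R i)) = d * \<upsilon>" by (simp add: expR)
  have s4: "(\<Sum>i\<in>{r..<r+d}. (1 - (-1::real))\<^sup>2) = 4 * d" by simp
  have "prob {\<omega>\<in>space M. (\<Sum>i\<in>{r..<r+d}. R i \<omega>) \<le> (\<Sum>i\<in>{r..<r+d}. expectation (R i)) - (J + d*\<upsilon>)}
      \<le> exp (-2 * (J + d*\<upsilon>)\<^sup>2 / (\<Sum>i\<in>{r..<r+d}. (1 - (-1::real))\<^sup>2))"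
    using d J ups by (intro H.Hoeffding_ineq_le) auto
  also have "\<dots> = exp (-2 * (J + d*\<upsilon>)\<^sup>2 / (4*d))" by (simp only: s4)
  also have "\<dots> \<le> exp (-J*\<upsilon> + d * (-\<upsilon>\<^sup>2/2))"
  proof (intro exp_le_cancel_iff[THEN iffD2])
    have "-2 * (J + d*\<upsilon>)\<^sup>2 / (4*d) = -J*\<upsilon> + d * (-\<upsilon>\<^sup>2/2) - J\<^sup>2/(2*d)"
      using d by (simp add: field_simps power2_eq_square)
    also have "\<dots> \<le> -J*\<upsilon> + d * (-\<upsilon>\<^sup>2/2)" using d by simp
    finally show "-2 * (J + d*\<upsilon>)\<^sup>2 / (4*d) \<le> -J*\<upsilon> + d * (-\<upsilon>\<^sup>2/2)" .
  qed
  also have "\<dots> = exp (-J*\<upsilon>) * exp (-\<upsilon>\<^sup>2/2) ^ d"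
    by (simp only: exp_add exp_of_nat_mult[symmetric])
  finally show ?thesis by (simp add: mu)
qed

definition "V A \<omega> = restrict (\<lambda>i. X i \<omega>) A"
abbreviation "CS \<equiv> (\<lambda>_::nat. count_space (UNIV::int set))"

lemma indep2:
  assumes AB: "A \<inter> B = {}" and SA: "SA \<in> sets (PiM A CS)" and SB: "SB \<in> sets (PiM B CS)"
  shows "prob ({\<omega>\<in>space M. V A \<omega> \<in> SA} \<inter> {\<omega>\<in>space M. V B \<omega> \<in> SB})
       = prob {\<omega>\<in>space M. V A \<omega> \<in> SA} * prob {\<omega>\<in>space M. V B \<omega> \<in> SB}"
proof -
  have "indep_var (PiM A CS) (V A) (PiM B CS) (V B)"
    unfolding V_def by (rule indep_var_restrict[OF indepX AB]) auto
  from indep_varD[OF this SA SB] show ?thesis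
    by (simp add: vimage_def Int_def conj_commute conj_left_commute)
qed

definition "p = \<beta> / (\<beta> + 1)"

lemma p: "0 < p" "p < 1"
  using beta by (auto simp: p_def field_simps)

lemma prob_ones:
  assumes "finite S"
  shows "prob {\<omega>\<in>space M. \<forall>i\<in>S. X i \<omega> = 1} = p ^ card S"
proof (cases "S = {}")
  case True then show ?thesis by (simp add: prob_space)
next
  case False
  have "prob (\<Inter>i\<in>S. X i -` {1} \<inter> space M) = (\<Prod>i\<in>S. prob (X i -` {1} \<inter> space M))"
    by (rule indep_varsD[OF indepX False assms]) auto
  also have "\<dots> = (\<Prod>i\<in>S. p)"
    by (intro prod.cong refl) (simp add: up p_def vimage_def Int_def conj_commute)
  also have "(\<Inter>i\<in>S. X i -` {1} \<inter> space M) = {\<omega>\<in>space M. \<forall>i\<in>S. X i \<omega> = 1}"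
    using False by auto
  finally show ?thesis by simp
qed

lemma meas_sumPi:
  assumes "finite I" "I \<subseteq> B"
  shows "(\<lambda>g. \<Sum>i\<in>I. real_of_int (g i)) \<in> borel_measurable (PiM B CS)"
proof (intro borel_measurable_sum)
  fix i assume "i \<in> I"
  then have "i \<in> B" using assms by auto
  then have "(\<lambda>g. g i) \<in> measurable (PiM B CS) (count_space UNIV)"
    by (rule measurable_component_singleton)
  moreover have "real_of_int \<in> measurable (count_space UNIV) borel" by simp
  ultimately show "(\<lambda>g. real_of_int (g i)) \<in> borel_measurable (PiM B CS)"
    by (rule measurable_compose)
qed

lemma geom_union:
  assumes A: "\<And>d. A d \<in> events" and b: "\<And>d. prob (A d) \<le> C * x ^ d"
    and x: "0 \<le> x" "x < 1"
  shows "prob (\<Union>d. A d) \<le> C / (1 - x)"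
proof -
  have s: "summable (\<lambda>d. C * x ^ d)" using x by (intro summable_mult summable_geometric) auto
  have s2: "summable (\<lambda>d. prob (A d))"
    by (rule summable_comparison_test[OF _ s]) (use b in auto)
  have "prob (\<Union>d. A d) \<le> (\<Sum>d. prob (A d))"
    by (rule finite_measure_subadditive_countably) (use A s2 in auto)
  also have "\<dots> \<le> (\<Sum>d. C * x ^ d)" by (rule suminf_le[OF b s2 s])
  also have "\<dots> = C / (1 - x)" using x by (simp add: suminf_mult suminf_geometric)
  finally show ?thesis .
qed

definition "Ew s J = {\<omega>\<in>space M. \<forall>i\<in>{s..<s+2*J}. X i \<omega> = 1}"
definition "Gw s J = {\<omega>\<in>space M. (\<exists>r<s. (\<Sum>i\<in>{r..<s}. R i \<omega>) \<le> -real J) \<or>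
     (\<exists>r>s+2*J. (\<Sum>i\<in>{s+2*J..<r}. R i \<omega>) \<le> -real J)}"

lemma Ew_prob: "prob (Ew s J) = p ^ (2*J)"
  unfolding Ew_def by (subst prob_ones) auto

lemma Ew_pair:
  assumes "s + 2*J \<le> s'"
  shows "prob (Ew s J \<inter> Ew s' J) = p ^ (4*J)"
proof -
  have "Ew s J \<inter> Ew s' J = {\<omega>\<in>space M. \<forall>i\<in>{s..<s+2*J} \<union> {s'..<s'+2*J}. X i \<omega> = 1}"
    unfolding Ew_def by auto
  moreover have "card ({s..<s+2*J} \<union> {s'..<s'+2*J}) = 4*J"
    using assms by (subst card_Un_disjoint) auto
  ultimately show ?thesis by (simp add: prob_ones)
qed

lemma Ew_V: "Ew s J = {\<omega>\<in>space M. V {s..<s+2*J} \<omega> \<in> Pi\<^sub>E {s..<s+2*J} (\<lambda>_. {1})}"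
proof -
  have "restrict f W \<in> Pi\<^sub>E W (\<lambda>_. {1}) \<longleftrightarrow> (\<forall>i\<in>W. f i = 1)" for f :: "nat \<Rightarrow> int" and W
    by (simp only: restrict_PiE_iff) simp
  then show ?thesis unfolding Ew_def V_def by simp
qed

lemma measV: "V A \<in> measurable M (PiM A CS)"
  unfolding V_def by (auto intro!: measurable_restrict)

lemma V_sets: "S \<in> sets (PiM A CS) \<Longrightarrow> {\<omega>\<in>space M. V A \<omega> \<in> S} \<in> events"
  using measurable_sets[OF measV] by (simp add: vimage_def Int_def conj_commute)

lemma Ew_set: "Pi\<^sub>E {s..<s+2*J} (\<lambda>_. {1}) \<in> sets (PiM {s..<s+2*J} CS)"
  by (rule sets_PiM_I_finite) auto

lemma Gw_V: "Gw s J = {\<omega>\<in>space M. V (- {s..<s+2*J}) \<omega> \<in>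
   {g\<in>space (PiM (- {s..<s+2*J}) CS). (\<exists>r<s. (\<Sum>i\<in>{r..<s}. real_of_int (g i)) \<le> -real J) \<or>
     (\<exists>r>s+2*J. (\<Sum>i\<in>{s+2*J..<r}. real_of_int (g i)) \<le> -real J)}}"
proof -
  have *: "V (- {s..<s+2*J}) \<omega> \<in> space (PiM (- {s..<s+2*J}) CS)" for \<omega>
    by (auto simp: V_def space_PiM)
  have "(\<Sum>i\<in>{r..<s}. real_of_int (V (- {s..<s+2*J}) \<omega> i)) = (\<Sum>i\<in>{r..<s}. R i \<omega>)" if "r < s" for r \<omega>
    by (intro sum.cong) (auto simp: V_def R_def)
  moreover have "(\<Sum>i\<in>{s+2*J..<r}. real_of_int (V (- {s..<s+2*J}) \<omega> i)) = (\<Sum>i\<in>{s+2*J..<r}. R i \<omega>)" for r \<omega>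
    by (intro sum.cong) (auto simp: V_def R_def)
  ultimately show ?thesis unfolding Gw_def using * by auto
qed

lemma Gw_set: "{g\<in>space (PiM (- {s..<s+2*J}) CS). (\<exists>r<s. (\<Sum>i\<in>{r..<s}. real_of_int (g i)) \<le> -real J) \<or>
     (\<exists>r>s+2*J. (\<Sum>i\<in>{s+2*J..<r}. real_of_int (g i)) \<le> -real J)} \<in> sets (PiM (- {s..<s+2*J}) CS)"
  (is "?S \<in> sets ?N")
proof -
  have m1: "{g\<in>space ?N. (\<Sum>i\<in>{r..<s}. real_of_int (g i)) \<le> -real J} \<in> sets ?N" if "r < s" for r
    using meas_sumPi[of "{r..<s}" "- {s..<s+2*J}"] that by measurable auto
  have m2: "{g\<in>space ?N. (\<Sum>i\<in>{s+2*J..<r}. real_of_int (g i)) \<le> -real J} \<in> sets ?N" for r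
    using meas_sumPi[of "{s+2*J..<r}" "- {s..<s+2*J}"] by measurable auto
  have "?S = (\<Union>r\<in>{..<s}. {g\<in>space ?N. (\<Sum>i\<in>{r..<s}. real_of_int (g i)) \<le> -real J})
     \<union> (\<Union>r\<in>{s+2*J<..}. {g\<in>space ?N. (\<Sum>i\<in>{s+2*J..<r}. real_of_int (g i)) \<le> -real J})"
    by auto
  also have "\<dots> \<in> sets ?N"
    using m1 m2 by (intro sets.Un sets.countable_UN') auto
  finally show ?thesis .
qed

lemma Gw_events: "Gw s J \<in> events"
  by (subst Gw_V, rule V_sets[OF Gw_set])

lemma Ew_events: "Ew s J \<in> events"
  unfolding Ew_def by measurable

lemma EG_prob: "prob (Ew s J \<inter> Gw s J) = p ^ (2*J) * prob (Gw s J)"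
proof -
  have "prob (Ew s J \<inter> Gw s J) = prob (Ew s J) * prob (Gw s J)"
    unfolding Ew_V Gw_V by (rule indep2[OF _ Ew_set Gw_set]) auto
  then show ?thesis by (simp add: Ew_prob)
qed

definition "xq = exp (-\<upsilon>\<^sup>2/2)"
definition "\<delta> J = 2 * exp (- real J * \<upsilon>) / (1 - xq)"

lemma xq: "0 \<le> xq" "xq < 1"
  using ups by (auto simp: xq_def)

lemma Gw_prob: "prob (Gw s J) \<le> \<delta> J"
proof -
  define P where "P d = (if 1 \<le> d \<and> d \<le> s then {\<omega>\<in>space M. (\<Sum>i\<in>{s-d..<s}. R i \<omega>) \<le> -real J} else {})" for d
  define F where "F d = (if 1 \<le> d then {\<omega>\<in>space M. (\<Sum>i\<in>{s+2*J..<s+2*J+d}. R i \<omega>) \<le> -real J} else {})" for d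
  have m: "{\<omega>\<in>space M. (\<Sum>i\<in>I. R i \<omega>) \<le> -real J} \<in> events" for I by measurable
  have Pe: "P d \<in> events" for d unfolding P_def using m by auto
  have Fe: "F d \<in> events" for d unfolding F_def using m by auto
  have Pb: "prob (P d) \<le> exp (- real J * \<upsilon>) * xq ^ d" for d
  proof (cases "1 \<le> d \<and> d \<le> s")
    case True
    have "prob (P d) = prob {\<omega>\<in>space M. (\<Sum>i\<in>{s-d..<s-d+d}. R i \<omega>) \<le> -real J}"
      using True by (simp add: P_def)
    also have "\<dots> \<le> exp (- real J * \<upsilon>) * xq ^ d"
      using True hoeff[of d "real J" "s-d"] by (simp add: xq_def)
    finally show ?thesis .
  next
    case False
    then have "P d = {}" unfolding P_def by auto
    then show ?thesis using xq by simp
  qed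
  have Fb: "prob (F d) \<le> exp (- real J * \<upsilon>) * xq ^ d" for d
  proof (cases "1 \<le> d")
    case True
    then show ?thesis using hoeff[of d "real J" "s+2*J"] by (simp add: xq_def F_def)
  next
    case False
    then have "F d = {}" unfolding F_def by auto
    then show ?thesis using xq by simp
  qed
  have sub: "Gw s J \<subseteq> (\<Union>d. P d) \<union> (\<Union>d. F d)"
  proof
    fix \<omega> assume "\<omega> \<in> Gw s J"
    then have \<omega>: "\<omega> \<in> space M" and
      c: "(\<exists>r<s. (\<Sum>i\<in>{r..<s}. R i \<omega>) \<le> -real J) \<or> (\<exists>r>s+2*J. (\<Sum>i\<in>{s+2*J..<r}. R i \<omega>) \<le> -real J)"
      unfolding Gw_def by auto
    from c show "\<omega> \<in> (\<Union>d. P d) \<union> (\<Union>d. F d)"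
    proof (elim disjE exE conjE)
      fix r assume "r < s" "(\<Sum>i\<in>{r..<s}. R i \<omega>) \<le> -real J"
      then have "\<omega> \<in> P (s - r)" using \<omega> by (auto simp: P_def)
      then show ?thesis by blast
    next
      fix r assume "r > s + 2*J" "(\<Sum>i\<in>{s+2*J..<r}. R i \<omega>) \<le> -real J"
      then have "\<omega> \<in> F (r - (s+2*J))" using \<omega> by (auto simp: F_def)
      then show ?thesis by blast
    qed
  qed
  have "prob (Gw s J) \<le> prob ((\<Union>d. P d) \<union> (\<Union>d. F d))"
    using sub Pe Fe by (intro finite_measure_mono) auto
  also have "\<dots> \<le> prob (\<Union>d. P d) + prob (\<Union>d. F d)"
    using Pe Fe by (intro measure_Un_le) auto
  also have "\<dots> \<le> exp (- real J * \<upsilon>) / (1 - xq) + exp (- real J * \<upsilon>) / (1 - xq)"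
    by (intro add_mono geom_union[OF Pe Pb xq] geom_union[OF Fe Fb xq])
  also have "\<dots> = \<delta> J" by (simp add: \<delta>_def)
  finally show ?thesis .
qed

lemma \<delta>_lim: "\<delta> \<longlonglongrightarrow> 0"
proof -
  have "(\<lambda>J. exp (- real J * \<upsilon>)) \<longlonglongrightarrow> 0"
  proof -
    have "(\<lambda>J. exp (-\<upsilon>) ^ J) \<longlonglongrightarrow> 0" using ups by (intro LIMSEQ_power_zero) auto
    moreover have "exp (- real J * \<upsilon>) = exp (-\<upsilon>) ^ J" for J
      by (subst exp_of_nat_mult[symmetric]) simp
    ultimately show ?thesis by simp
  qed
  then have "(\<lambda>J. 2 * exp (- real J * \<upsilon>) / (1 - xq)) \<longlonglongrightarrow> 2 * 0 / (1 - xq)"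
    by (intro tendsto_intros) (use xq in auto)
  then show ?thesis by (simp add: \<delta>_def[abs_def])
qed

lemma measure_le_super: "A \<subseteq> B \<Longrightarrow> B \<in> events \<Longrightarrow> prob A \<le> prob B"
  by (cases "A \<in> events") (auto intro: finite_measure_mono simp: measure_notin_sets)

lemma sum_ind_card: "finite I \<Longrightarrow> (\<Sum>i\<in>I. indicator (A i) \<omega> :: real) = real (card {i\<in>I. \<omega> \<in> A i})"
proof (induction I rule: finite_induct)
  case (insert x F)
  have "{i\<in>insert x F. \<omega> \<in> A i} = (if \<omega> \<in> A x then insert x {i\<in>F. \<omega> \<in> A i} else {i\<in>F. \<omega> \<in> A i})"
    by auto
  then show ?case using insert by (auto simp: indicator_def)
qed simp

lemma window_regen:
  assumes "\<omega> \<in> Ew s J - Gw s J"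
  shows "is_regen (walk X \<omega>) (s + J)"
proof -
  have w: "walk X \<omega> = (\<lambda>m. \<Sum>k<m. X k \<omega>)" by (simp add: walk_def[abs_def])
  have RX: "(\<Sum>i\<in>I. R i \<omega>) = real_of_int (\<Sum>i\<in>I. X i \<omega>)" for I by (simp add: R_def)
  have cast: "(- real J < (\<Sum>i\<in>I. real_of_int (X i \<omega>))) = (- int J < (\<Sum>i\<in>I. X i \<omega>))" for I
    by (metis of_int_less_iff of_int_minus of_int_of_nat_eq of_int_sum)
  have "\<forall>i\<in>{s..<s+2*J}. X i \<omega> = 1" using assms by (simp add: Ew_def)
  moreover have "\<forall>r<s. (\<Sum>i\<in>{r..<s}. X i \<omega>) > - int J"
    using assms by (auto simp: Gw_def Ew_def R_def not_le cast)
  moreover have "\<forall>r>s+2*J. (\<Sum>i\<in>{s+2*J..<r}. X i \<omega>) > - int J"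
    using assms by (auto simp: Gw_def Ew_def R_def not_le cast)
  ultimately show ?thesis unfolding w by (rule regen_window)
qed

lemma int_ind: "A \<in> events \<Longrightarrow> integrable M (indicator A :: 'a \<Rightarrow> real)"
  by (rule integrable_real_indicator) (auto simp: emeasure_eq_measure)

lemma count_bound:
  assumes J: "J \<ge> 1" and L: "L \<ge> 1"
  shows "\<exists>E'\<in>events. {\<omega>\<in>space M. real (card {m\<in>{1..2*J*L}. is_regen (walk X \<omega>) m}) \<le> real L * p^(2*J) / 4} \<subseteq> E'
     \<and> prob E' \<le> 4 / (real L * p^(2*J)) + 4 * \<delta> J"
proof -
  define q where "q = p^(2*J)"
  have q: "0 < q" "q \<le> 1" using p by (auto simp: q_def power_le_one)
  have Lq: "real L * q > 0" using q L by simp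
  have q2: "q\<^sup>2 = p^(4*J)"
  proof -
    have "4*J = 2*J*2" by simp
    then show ?thesis by (simp only: q_def power_mult)
  qed
  define E where "E i = Ew (2*J*i) J" for i
  define G where "G i = Gw (2*J*i) J" for i
  have Ee: "E i \<in> events" for i unfolding E_def by (rule Ew_events)
  have Ge: "G i \<in> events" for i unfolding G_def by (rule Gw_events)
  define N where "N \<omega> = (\<Sum>i<L. indicator (E i) \<omega> :: real)" for \<omega>
  define F where "F \<omega> = (\<Sum>i<L. indicator (E i \<inter> G i) \<omega> :: real)" for \<omega>
  have Nm[measurable]: "N \<in> borel_measurable M" unfolding N_def using Ee by measurable
  have Fm[measurable]: "F \<in> borel_measurable M" unfolding F_def using Ee Ge by measurable
  have Nb: "0 \<le> N \<omega> \<and> N \<omega> \<le> real L" for \<omega>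
  proof -
    have "N \<omega> \<le> (\<Sum>i<L. 1)" unfolding N_def by (intro sum_mono) (auto simp: indicator_def)
    moreover have "0 \<le> N \<omega>" unfolding N_def by (intro sum_nonneg) auto
    ultimately show ?thesis by simp
  qed
  have Fb: "0 \<le> F \<omega> \<and> F \<omega> \<le> real L" for \<omega>
  proof -
    have "F \<omega> \<le> (\<Sum>i<L. 1)" unfolding F_def by (intro sum_mono) (auto simp: indicator_def)
    moreover have "0 \<le> F \<omega>" unfolding F_def by (intro sum_nonneg) auto
    ultimately show ?thesis by simp
  qed
  have Ni: "integrable M N" by (rule integrable_const_bound[where B="real L"]) (use Nb in auto)
  have N2i: "integrable M (\<lambda>\<omega>. (N \<omega>)\<^sup>2)"
  proof (rule integrable_const_bound[where B="real L ^ 2"])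
    show "AE x in M. norm ((N x)\<^sup>2) \<le> real L ^ 2" using Nb by (auto intro!: power_mono)
  qed auto
  have Fi: "integrable M F" by (rule integrable_const_bound[where B="real L"]) (use Fb in auto)
  have EN: "expectation N = real L * q"
  proof -
    have "expectation N = (\<Sum>i<L. prob (E i))"
      unfolding N_def using Ee by (subst Bochner_Integration.integral_sum) (auto simp: integral_indicator sets.Int_space_eq2 int_ind)
    also have "\<dots> = real L * q" by (simp add: E_def Ew_prob q_def)
    finally show ?thesis .
  qed
  have EN2: "expectation (\<lambda>\<omega>. (N \<omega>)\<^sup>2) \<le> real L * q + (real L * q)\<^sup>2"
  proof -
    have sq: "(N \<omega>)\<^sup>2 = (\<Sum>i<L. \<Sum>j<L. indicator (E i \<inter> E j) \<omega>)" for \<omega>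
      unfolding N_def power2_eq_square sum_product by (simp add: indicator_inter_arith)
    have "expectation (\<lambda>\<omega>. (N \<omega>)\<^sup>2) = (\<Sum>i<L. \<Sum>j<L. prob (E i \<inter> E j))"
    proof -
      have EE: "E i \<inter> E j \<in> events" for i j using Ee by auto
      have "expectation (\<lambda>\<omega>. (N \<omega>)\<^sup>2) = (\<Sum>i<L. expectation (\<lambda>\<omega>. \<Sum>j<L. indicator (E i \<inter> E j) \<omega>))"
        unfolding sq by (rule Bochner_Integration.integral_sum) (auto intro!: integrable_sum int_ind EE)
      also have "\<dots> = (\<Sum>i<L. \<Sum>j<L. prob (E i \<inter> E j))"
        by (intro sum.cong refl, subst Bochner_Integration.integral_sum) (auto simp: integral_indicator sets.Int_space_eq2 int_ind EE)
      finally show ?thesis .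
    qed
    also have "\<dots> \<le> (\<Sum>i<L. \<Sum>j<L. (if i = j then q else 0) + q\<^sup>2)"
    proof (intro sum_mono)
      fix i j assume "i \<in> {..<L}" "j \<in> {..<L}"
      show "prob (E i \<inter> E j) \<le> (if i = j then q else 0) + q\<^sup>2"
      proof (cases i j rule: linorder_cases)
        case less
        then have "2*J*(i+1) \<le> 2*J*j" by (intro mult_le_mono2) simp
        then have "2*J*i + 2*J \<le> 2*J*j" by (simp add: distrib_left)
        then have "prob (E i \<inter> E j) = p^(4*J)" unfolding E_def by (rule Ew_pair)
        then show ?thesis using less q2 by simp
      next
        case greater
        then have "2*J*(j+1) \<le> 2*J*i" by (intro mult_le_mono2) simp
        then have "2*J*j + 2*J \<le> 2*J*i" by (simp add: distrib_left)
        then have "prob (E j \<inter> E i) = p^(4*J)" unfolding E_def by (rule Ew_pair)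
        then show ?thesis using greater q2 by (simp add: Int_commute)
      next
        case equal
        then show ?thesis by (simp add: E_def Ew_prob q_def)
      qed
    qed
    also have "\<dots> = real L * q + (real L * q)\<^sup>2"
      by (simp add: sum.distrib power_mult_distrib power2_eq_square algebra_simps)
    finally show ?thesis .
  qed
  have var: "variance N \<le> real L * q"
    using EN2 by (subst variance_eq) (auto simp: Ni N2i EN)
  have P1: "prob {\<omega>\<in>space M. \<bar>N \<omega> - expectation N\<bar> \<ge> real L * q / 2} \<le> 4 / (real L * q)"
  proof -
    have "prob {\<omega>\<in>space M. \<bar>N \<omega> - expectation N\<bar> \<ge> real L * q / 2} \<le> variance N / (real L * q / 2)\<^sup>2"
      using Lq N2i by (intro Chebyshev_inequality) auto
    also have "\<dots> \<le> (real L * q) / (real L * q / 2)\<^sup>2"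
      using var by (intro divide_right_mono) auto
    also have "\<dots> = 4 / (real L * q)" using Lq by (simp add: power2_eq_square field_simps)
    finally show ?thesis .
  qed
  have EF: "expectation F \<le> real L * q * \<delta> J"
  proof -
    have "expectation F = (\<Sum>i<L. prob (E i \<inter> G i))"
      unfolding F_def using Ee Ge by (subst Bochner_Integration.integral_sum) (auto simp: integral_indicator sets.Int_space_eq2 int_ind)
    also have "\<dots> \<le> (\<Sum>i<L. q * \<delta> J)"
      by (intro sum_mono) (use q in \<open>auto simp: E_def G_def EG_prob q_def[symmetric] Gw_prob\<close>)
    finally show ?thesis by simp
  qed
  have P2: "prob {\<omega>\<in>space M. F \<omega> \<ge> real L * q / 4} \<le> 4 * \<delta> J"
  proof -
    have "prob {\<omega>\<in>space M. F \<omega> \<ge> real L * q / 4} \<le> expectation F / (real L * q / 4)"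
      using Lq Fi Fb by (intro integral_Markov_inequality_measure[where A="space M"]) auto
    also have "\<dots> \<le> (real L * q * \<delta> J) / (real L * q / 4)"
      using EF Lq by (intro divide_right_mono) auto
    also have "\<dots> = 4 * \<delta> J" using q L by (simp add: field_simps)
    finally show ?thesis .
  qed
  have sub: "{\<omega>\<in>space M. real (card {m\<in>{1..2*J*L}. is_regen (walk X \<omega>) m}) \<le> real L * q / 4}
     \<subseteq> {\<omega>\<in>space M. \<bar>N \<omega> - expectation N\<bar> \<ge> real L * q / 2} \<union> {\<omega>\<in>space M. F \<omega> \<ge> real L * q / 4}"
  proof (rule subsetI, rule ccontr)
    fix \<omega> assume \<omega>: "\<omega> \<in> {\<omega>\<in>space M. real (card {m\<in>{1..2*J*L}. is_regen (walk X \<omega>) m}) \<le> real L * q / 4}"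
      and nb: "\<omega> \<notin> {\<omega>\<in>space M. \<bar>N \<omega> - expectation N\<bar> \<ge> real L * q / 2} \<union> {\<omega>\<in>space M. F \<omega> \<ge> real L * q / 4}"
    from \<omega> nb have n1': "\<bar>N \<omega> - real L * q\<bar> < real L * q / 2" and n2: "F \<omega> < real L * q / 4"
      by (auto simp: EN)
    from n1' have n1: "N \<omega> > real L * q / 2" by linarith
    have "N \<omega> - F \<omega> = (\<Sum>i<L. indicator (E i - G i) \<omega>)"
      unfolding N_def F_def by (subst sum_subtractf[symmetric]) (intro sum.cong, auto simp: indicator_def)
    also have "\<dots> = real (card {i\<in>{..<L}. \<omega> \<in> E i - G i})" by (rule sum_ind_card) simp
    also have "card {i\<in>{..<L}. \<omega> \<in> E i - G i} \<le> card {m\<in>{1..2*J*L}. is_regen (walk X \<omega>) m}"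
    proof (rule card_inj_on_le)
      show "inj_on (\<lambda>i. 2*J*i + J) {i\<in>{..<L}. \<omega> \<in> E i - G i}" using J by (auto simp: inj_on_def)
      show "finite {m\<in>{1..2*J*L}. is_regen (walk X \<omega>) m}" by simp
      show "(\<lambda>i. 2*J*i + J) ` {i\<in>{..<L}. \<omega> \<in> E i - G i} \<subseteq> {m\<in>{1..2*J*L}. is_regen (walk X \<omega>) m}"
      proof safe
        fix i assume i: "i < L" "\<omega> \<in> E i" "\<omega> \<notin> G i"
        have "2*J*(i+1) \<le> 2*J*L" using i by (intro mult_le_mono2) auto
        then show "2*J*i + J \<in> {1..2*J*L}" using J by auto
        show "is_regen (walk X \<omega>) (2*J*i + J)" using i unfolding E_def G_def by (intro window_regen) auto
      qed
    qed
    finally have "N \<omega> - F \<omega> \<le> real (card {m\<in>{1..2*J*L}. is_regen (walk X \<omega>) m})" by simp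
    with \<omega> n1 n2 show False by auto
  qed
  have "prob ({\<omega>\<in>space M. \<bar>N \<omega> - expectation N\<bar> \<ge> real L * q / 2} \<union> {\<omega>\<in>space M. F \<omega> \<ge> real L * q / 4})
     \<le> prob {\<omega>\<in>space M. \<bar>N \<omega> - expectation N\<bar> \<ge> real L * q / 2} + prob {\<omega>\<in>space M. F \<omega> \<ge> real L * q / 4}"
    by (rule measure_Un_le) measurable
  also have "\<dots> \<le> 4 / (real L * q) + 4 * \<delta> J" using P1 P2 by simp
  finally have "prob ({\<omega>\<in>space M. \<bar>N \<omega> - expectation N\<bar> \<ge> real L * q / 2} \<union> {\<omega>\<in>space M. F \<omega> \<ge> real L * q / 4})
     \<le> 4 / (real L * q) + 4 * \<delta> J" .
  moreover have "{\<omega>\<in>space M. \<bar>N \<omega> - expectation N\<bar> \<ge> real L * q / 2} \<union> {\<omega>\<in>space M. F \<omega> \<ge> real L * q / 4} \<in> events"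
    by measurable
  ultimately show ?thesis using sub unfolding q_def by blast
qed

definition "Z i \<omega> = R i \<omega> - \<upsilon>"
definition "S k \<omega> = (\<Sum>i<k. Z i \<omega>)"

lemma measZ[measurable]: "Z i \<in> borel_measurable M" unfolding Z_def by measurable
lemma measS[measurable]: "S k \<in> borel_measurable M" unfolding S_def by measurable

lemma AEall: "AE \<omega> in M. \<forall>i. \<bar>Z i \<omega>\<bar> \<le> 2"
proof -
  have "AE \<omega> in M. \<bar>Z i \<omega>\<bar> \<le> 2" for i
    using AE_R[of i] by eventually_elim (use ups in \<open>auto simp: Z_def\<close>)
  then show ?thesis by (simp add: AE_all_countable)
qed

lemma bint:
  fixes f :: "'a \<Rightarrow> real" and C :: real
  assumes "f \<in> borel_measurable M" "\<And>\<omega>. \<forall>i. \<bar>Z i \<omega>\<bar> \<le> 2 \<Longrightarrow> \<bar>f \<omega>\<bar> \<le> C"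
  shows "integrable M f"
proof (rule integrable_const_bound[where B=C])
  show "AE x in M. norm (f x) \<le> C" using AEall by eventually_elim (use assms in auto)
qed (use assms in auto)

lemma Sbound: "\<forall>i. \<bar>Z i \<omega>\<bar> \<le> 2 \<Longrightarrow> \<bar>S k \<omega>\<bar> \<le> 2 * real k"
proof -
  assume a: "\<forall>i. \<bar>Z i \<omega>\<bar> \<le> 2"
  have "\<bar>S k \<omega>\<bar> \<le> (\<Sum>i<k. \<bar>Z i \<omega>\<bar>)" unfolding S_def by (rule sum_abs)
  also have "\<dots> \<le> (\<Sum>i<k. 2)" using a by (intro sum_mono) auto
  finally show ?thesis by simp
qed

lemma S_split: "k \<le> m \<Longrightarrow> S m \<omega> - S k \<omega> = (\<Sum>i\<in>{k..<m}. Z i \<omega>)"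
proof -
  assume "k \<le> m"
  then have "{..<m} = {..<k} \<union> {k..<m}" by auto
  then show ?thesis unfolding S_def by (simp add: sum.union_disjoint[of "{..<k}" "{k..<m}"] ivl_disj_int)
qed

lemma EZ: "expectation (Z i) = 0"
  unfolding Z_def using intR[of i] by (simp add: expR prob_space)

lemma intZ: "integrable M (Z i)"
  unfolding Z_def using intR[of i] by simp

lemma orth:
  assumes km: "k \<le> m" and B: "B \<in> sets (PiM {..<k} (\<lambda>_. borel))"
  shows "expectation (\<lambda>\<omega>. indicator {\<omega>\<in>space M. restrict (\<lambda>i. R i \<omega>) {..<k} \<in> B} \<omega> * S k \<omega> * (S m \<omega> - S k \<omega>)) = 0"
proof -
  define V1 where "V1 \<omega> = restrict (\<lambda>i. R i \<omega>) {..<k}" for \<omega>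
  define V2 where "V2 \<omega> = restrict (\<lambda>i. R i \<omega>) {k..<m}" for \<omega>
  define f1 where "f1 g = indicator B g * (\<Sum>i<k. g i - \<upsilon>)" for g :: "nat \<Rightarrow> real"
  define f2 where "f2 g = (\<Sum>i\<in>{k..<m}. g i - \<upsilon>)" for g :: "nat \<Rightarrow> real"
  have f1m: "f1 \<in> borel_measurable (PiM {..<k} (\<lambda>_. borel))"
    unfolding f1_def using B by (intro borel_measurable_times borel_measurable_indicator borel_measurable_sum) auto
  have f2m: "f2 \<in> borel_measurable (PiM {k..<m} (\<lambda>_. borel))"
    unfolding f2_def by (intro borel_measurable_sum) auto
  have ind: "indep_var borel (f1 \<circ> V1) borel (f2 \<circ> V2)"
    unfolding V1_def V2_def by (intro indep_var_compose[OF indep_var_restrict[OF indepR]] f1m f2m) auto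
  have e1: "(f1 \<circ> V1) \<omega> = indicator {\<omega>\<in>space M. restrict (\<lambda>i. R i \<omega>) {..<k} \<in> B} \<omega> * S k \<omega>"
    if "\<omega> \<in> space M" for \<omega>
    using that by (simp add: f1_def V1_def S_def Z_def indicator_def)
  have e2: "(f2 \<circ> V2) \<omega> = S m \<omega> - S k \<omega>" for \<omega>
    by (simp add: f2_def V2_def S_split[OF km] Z_def)
  have m1: "(f1 \<circ> V1) \<in> borel_measurable M" using ind by (rule indep_var_rv1)
  have m2: "(f2 \<circ> V2) \<in> borel_measurable M" using ind by (rule indep_var_rv2)
  have i1: "integrable M (f1 \<circ> V1)"
  proof (rule bint[OF m1])
    fix \<omega> assume a: "\<forall>i. \<bar>Z i \<omega>\<bar> \<le> 2"
    have "\<bar>(f1 \<circ> V1) \<omega>\<bar> \<le> \<bar>S k \<omega>\<bar>"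
      by (simp add: f1_def V1_def S_def Z_def indicator_def)
    also have "\<dots> \<le> 2 * real k" using Sbound[OF a] .
    finally show "\<bar>(f1 \<circ> V1) \<omega>\<bar> \<le> 2 * real k" .
  qed
  have i2: "integrable M (f2 \<circ> V2)"
  proof (rule bint[OF m2])
    fix \<omega> assume a: "\<forall>i. \<bar>Z i \<omega>\<bar> \<le> 2"
    have "\<bar>(f2 \<circ> V2) \<omega>\<bar> \<le> \<bar>S m \<omega>\<bar> + \<bar>S k \<omega>\<bar>" unfolding e2 by linarith
    also have "\<dots> \<le> 2 * real m + 2 * real k" using Sbound[OF a, of m] Sbound[OF a, of k] by linarith
    finally show "\<bar>(f2 \<circ> V2) \<omega>\<bar> \<le> 2 * real m + 2 * real k" .
  qed
  have "expectation (\<lambda>\<omega>. indicator {\<omega>\<in>space M. restrict (\<lambda>i. R i \<omega>) {..<k} \<in> B} \<omega> * S k \<omega> * (S m \<omega> - S k \<omega>))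
     = expectation (\<lambda>\<omega>. (f1 \<circ> V1) \<omega> * (f2 \<circ> V2) \<omega>)"
    by (intro Bochner_Integration.integral_cong refl) (simp add: e1[unfolded comp_def] e2[unfolded comp_def])
  also have "\<dots> = expectation (f1 \<circ> V1) * expectation (f2 \<circ> V2)"
    by (rule indep_var_lebesgue_integral[OF ind i1 i2])
  also have "expectation (f2 \<circ> V2) = 0"
  proof -
    have "expectation (f2 \<circ> V2) = expectation (\<lambda>\<omega>. \<Sum>i\<in>{k..<m}. Z i \<omega>)"
      by (intro Bochner_Integration.integral_cong refl) (simp add: e2[unfolded comp_def] S_split[OF km])
    also have "\<dots> = 0" by (subst Bochner_Integration.integral_sum) (auto simp: intZ EZ)
    finally show ?thesis .
  qed
  finally show ?thesis by (simp only: mult_zero_right)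
qed

lemma EZ2: "expectation (\<lambda>\<omega>. (Z i \<omega>)\<^sup>2) \<le> 1"
proof -
  have "expectation (\<lambda>\<omega>. (Z i \<omega>)\<^sup>2) = expectation (\<lambda>\<omega>. (1 + \<upsilon>\<^sup>2) - 2 * \<upsilon> * R i \<omega>)"
  proof (intro integral_cong_AE)
    show "AE \<omega> in M. (Z i \<omega>)\<^sup>2 = (1 + \<upsilon>\<^sup>2) - 2 * \<upsilon> * R i \<omega>"
      using AE_pm[of i] by eventually_elim (auto simp: Z_def R_def power2_eq_square algebra_simps)
  qed auto
  also have "\<dots> = (1 + \<upsilon>\<^sup>2) - 2 * \<upsilon> * \<upsilon>"
    using intR[of i] by (simp add: expR prob_space)
  also have "\<dots> \<le> 1" by (simp add: power2_eq_square)
  finally show ?thesis .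
qed

lemma intS2: "integrable M (\<lambda>\<omega>. (S m \<omega>)\<^sup>2)"
proof (rule bint)
  fix \<omega> assume a: "\<forall>i. \<bar>Z i \<omega>\<bar> \<le> 2"
  have "\<bar>S m \<omega>\<bar> \<le> 2 * real m" by (rule Sbound[OF a])
  then have "\<bar>S m \<omega>\<bar>\<^sup>2 \<le> (2 * real m)\<^sup>2" by (intro power_mono) auto
  then show "\<bar>(S m \<omega>)\<^sup>2\<bar> \<le> (2 * real m)\<^sup>2" by simp
qed measurable

lemma ES2: "expectation (\<lambda>\<omega>. (S m \<omega>)\<^sup>2) \<le> real m"
proof (induction m)
  case 0 then show ?case by (simp add: S_def)
next
  case (Suc m)
  have SS: "S (Suc m) \<omega> = S m \<omega> + Z m \<omega>" for \<omega> by (simp add: S_def)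
  have sp: "restrict (\<lambda>i. R i \<omega>) {..<m} \<in> space (PiM {..<m} (\<lambda>_. borel))" for \<omega>
    by (simp add: space_PiM)
  have o: "expectation (\<lambda>\<omega>. indicator {\<omega>\<in>space M. restrict (\<lambda>i. R i \<omega>) {..<m} \<in> space (PiM {..<m} (\<lambda>_. borel))} \<omega>
      * S m \<omega> * (S (Suc m) \<omega> - S m \<omega>)) = 0"
    by (rule orth) auto
  have "expectation (\<lambda>\<omega>. S m \<omega> * Z m \<omega>) = 0"
    using o by (subst (asm) Bochner_Integration.integral_cong[OF refl, where g="\<lambda>\<omega>. S m \<omega> * Z m \<omega>"]) (auto simp: sp SS)
  have iSZ: "integrable M (\<lambda>\<omega>. S m \<omega> * Z m \<omega>)"
  proof (rule bint)
    fix \<omega> assume a: "\<forall>i. \<bar>Z i \<omega>\<bar> \<le> 2"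
    have "\<bar>S m \<omega> * Z m \<omega>\<bar> \<le> (2 * real m) * 2" unfolding abs_mult
      using Sbound[OF a, of m] a by (intro mult_mono) auto
    then show "\<bar>S m \<omega> * Z m \<omega>\<bar> \<le> (2 * real m) * 2" .
  qed measurable
  have iZ2: "integrable M (\<lambda>\<omega>. (Z m \<omega>)\<^sup>2)"
  proof (rule bint)
    fix \<omega> assume a: "\<forall>i. \<bar>Z i \<omega>\<bar> \<le> 2"
    then have "\<bar>Z m \<omega>\<bar>\<^sup>2 \<le> 2\<^sup>2" by (intro power_mono) auto
    then show "\<bar>(Z m \<omega>)\<^sup>2\<bar> \<le> 4" by simp
  qed measurable
  have "expectation (\<lambda>\<omega>. (S (Suc m) \<omega>)\<^sup>2)
      = expectation (\<lambda>\<omega>. (S m \<omega>)\<^sup>2 + 2 * (S m \<omega> * Z m \<omega>) + (Z m \<omega>)\<^sup>2)"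
    by (intro Bochner_Integration.integral_cong refl) (simp add: SS power2_eq_square algebra_simps)
  also have "\<dots> = expectation (\<lambda>\<omega>. (S m \<omega>)\<^sup>2) + 2 * expectation (\<lambda>\<omega>. S m \<omega> * Z m \<omega>) + expectation (\<lambda>\<omega>. (Z m \<omega>)\<^sup>2)"
    using intS2[of m] iSZ iZ2 by simp
  also have "\<dots> \<le> real m + 2 * 0 + 1"
    using Suc.IH EZ2[of m] \<open>expectation (\<lambda>\<omega>. S m \<omega> * Z m \<omega>) = 0\<close> by simp
  finally show ?case by simp
qed

lemma Bk_sets:
  "{g\<in>space (PiM {..<k::nat} (\<lambda>_. borel)). (c::real) \<le> \<bar>\<Sum>i<k. g i - u\<bar> \<and> (\<forall>j<k. \<bar>\<Sum>i<j. g i - u\<bar> < c)}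
     \<in> sets (PiM {..<k} (\<lambda>_. borel))"
proof -
  have h: "(\<lambda>x. \<Sum>i<j. x i - u) \<in> borel_measurable (PiM {..<k} (\<lambda>_. borel))" if "j \<le> k" for j
    using that by (intro borel_measurable_sum borel_measurable_diff measurable_component_singleton[where M="\<lambda>_. borel", simplified]) auto
  have "Measurable.pred (PiM {..<k} (\<lambda>_. borel)) (\<lambda>x. \<forall>j\<in>{..<k}. \<bar>\<Sum>i<j. x i - u\<bar> < c)"
  proof (rule pred_intros_finite)
    fix j assume "j \<in> {..<k}"
    then have [measurable]: "(\<lambda>x. \<Sum>i<j. x i - u) \<in> borel_measurable (PiM {..<k} (\<lambda>_. borel))" by (intro h) auto
    show "Measurable.pred (PiM {..<k} (\<lambda>_. borel)) (\<lambda>x. \<bar>\<Sum>i<j. x i - u\<bar> < c)" by measurable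
  qed auto
  then have [measurable]: "Measurable.pred (PiM {..<k} (\<lambda>_. borel)) (\<lambda>x. \<forall>j<k. \<bar>\<Sum>i<j. x i - u\<bar> < c)"
    by (simp add: lessThan_def Ball_def)
  show ?thesis by measurable
qed

lemma kolmogorov:
  assumes lam: "lam > 0"
  shows "prob {\<omega>\<in>space M. \<exists>k\<le>m. \<bar>S k \<omega>\<bar> \<ge> lam} \<le> real m / lam\<^sup>2"
proof -
  define A where "A k = {\<omega>\<in>space M. lam \<le> \<bar>S k \<omega>\<bar> \<and> (\<forall>j<k. \<bar>S j \<omega>\<bar> < lam)}" for k
  have Ae: "A k \<in> events" for k unfolding A_def by measurable
  define Bk where "Bk k = {g\<in>space (PiM {..<k::nat} (\<lambda>_. borel)). lam \<le> \<bar>\<Sum>i<k. g i - \<upsilon>\<bar> \<and> (\<forall>j<k. \<bar>\<Sum>i<j. g i - \<upsilon>\<bar> < lam)}" for k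
  have AB: "A k = {\<omega>\<in>space M. restrict (\<lambda>i. R i \<omega>) {..<k} \<in> Bk k}" for k
  proof -
    have "(\<Sum>i<j. restrict (\<lambda>i. R i \<omega>) {..<k} i - \<upsilon>) = S j \<omega>" if "j \<le> k" for j \<omega>
      using that unfolding S_def Z_def by (intro sum.cong) auto
    then show ?thesis unfolding A_def Bk_def by (auto simp: space_PiM)
  qed
  have ind_le: "(\<Sum>k\<le>m. indicator (A k) \<omega>) \<le> (1::real)" for \<omega>
  proof -
    have "card {k\<in>{..m}. \<omega> \<in> A k} \<le> Suc 0"
    proof (subst card_le_Suc0_iff_eq, simp, intro ballI)
      fix k1 k2 assume "k1 \<in> {k\<in>{..m}. \<omega> \<in> A k}" "k2 \<in> {k\<in>{..m}. \<omega> \<in> A k}"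
      then show "k1 = k2" unfolding A_def by (metis (no_types, lifting) linorder_neqE_nat mem_Collect_eq not_le)
    qed
    then show ?thesis by (simp add: sum_ind_card)
  qed
  have intA: "integrable M (\<lambda>\<omega>. indicator (A k) \<omega> * (S j \<omega>)\<^sup>2)" for k j
  proof (rule bint)
    show "(\<lambda>\<omega>. indicator (A k) \<omega> * (S j \<omega>)\<^sup>2) \<in> borel_measurable M" using Ae by measurable
    fix \<omega> assume a: "\<forall>i. \<bar>Z i \<omega>\<bar> \<le> 2"
    have "\<bar>S j \<omega>\<bar>\<^sup>2 \<le> (2 * real j)\<^sup>2" using Sbound[OF a, of j] by (intro power_mono) auto
    then show "\<bar>indicator (A k) \<omega> * (S j \<omega>)\<^sup>2\<bar> \<le> (2 * real j)\<^sup>2" by (auto simp: indicator_def)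
  qed
  have step: "lam\<^sup>2 * prob (A k) \<le> expectation (\<lambda>\<omega>. indicator (A k) \<omega> * (S m \<omega>)\<^sup>2)" if km: "k \<le> m" for k
  proof -
    have "lam\<^sup>2 * prob (A k) = expectation (\<lambda>\<omega>. lam\<^sup>2 * indicator (A k) \<omega>)"
      using Ae by (simp add: sets.Int_space_eq2)
    also have "\<dots> \<le> expectation (\<lambda>\<omega>. indicator (A k) \<omega> * (S k \<omega>)\<^sup>2)"
    proof (rule integral_mono)
      show "integrable M (\<lambda>\<omega>. lam\<^sup>2 * indicator (A k) \<omega>)" using int_ind[OF Ae] by simp
      show "integrable M (\<lambda>\<omega>. indicator (A k) \<omega> * (S k \<omega>)\<^sup>2)" by (rule intA)
      fix \<omega> show "lam\<^sup>2 * indicator (A k) \<omega> \<le> indicator (A k) \<omega> * (S k \<omega>)\<^sup>2"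
      proof (cases "\<omega> \<in> A k")
        case True
        then have "lam \<le> \<bar>S k \<omega>\<bar>" unfolding A_def by auto
        then have "lam\<^sup>2 \<le> \<bar>S k \<omega>\<bar>\<^sup>2" using lam by (intro power_mono) auto
        then show ?thesis using True by simp
      qed simp
    qed
    also have "\<dots> \<le> expectation (\<lambda>\<omega>. indicator (A k) \<omega> * (S m \<omega>)\<^sup>2)"
    proof -
      define D where "D \<omega> = S m \<omega> - S k \<omega>" for \<omega>
      have iD: "integrable M (\<lambda>\<omega>. indicator (A k) \<omega> * (D \<omega>)\<^sup>2)"
      proof (rule bint)
        show "(\<lambda>\<omega>. indicator (A k) \<omega> * (D \<omega>)\<^sup>2) \<in> borel_measurable M" unfolding D_def using Ae by measurable
        fix \<omega> assume a: "\<forall>i. \<bar>Z i \<omega>\<bar> \<le> 2"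
        have "\<bar>D \<omega>\<bar> \<le> 2 * real m + 2 * real k" unfolding D_def using Sbound[OF a, of m] Sbound[OF a, of k] by linarith
        then have "\<bar>D \<omega>\<bar>\<^sup>2 \<le> (2 * real m + 2 * real k)\<^sup>2" by (intro power_mono) auto
        then show "\<bar>indicator (A k) \<omega> * (D \<omega>)\<^sup>2\<bar> \<le> (2 * real m + 2 * real k)\<^sup>2" by (auto simp: indicator_def)
      qed
      have iX: "integrable M (\<lambda>\<omega>. indicator (A k) \<omega> * S k \<omega> * D \<omega>)"
      proof (rule bint)
        show "(\<lambda>\<omega>. indicator (A k) \<omega> * S k \<omega> * D \<omega>) \<in> borel_measurable M" unfolding D_def using Ae by measurable
        fix \<omega> assume a: "\<forall>i. \<bar>Z i \<omega>\<bar> \<le> 2"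
        have "\<bar>D \<omega>\<bar> \<le> 2 * real m + 2 * real k" unfolding D_def using Sbound[OF a, of m] Sbound[OF a, of k] by linarith
        then have "\<bar>S k \<omega> * D \<omega>\<bar> \<le> (2 * real k) * (2 * real m + 2 * real k)"
          unfolding abs_mult using Sbound[OF a, of k] by (intro mult_mono) auto
        then show "\<bar>indicator (A k) \<omega> * S k \<omega> * D \<omega>\<bar> \<le> (2 * real k) * (2 * real m + 2 * real k)"
          by (auto simp: indicator_def)
      qed
      have o: "expectation (\<lambda>\<omega>. indicator (A k) \<omega> * S k \<omega> * D \<omega>) = 0"
        unfolding D_def AB by (rule orth[OF km]) (unfold Bk_def, rule Bk_sets)
      have "expectation (\<lambda>\<omega>. indicator (A k) \<omega> * (S m \<omega>)\<^sup>2)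
         = expectation (\<lambda>\<omega>. indicator (A k) \<omega> * (S k \<omega>)\<^sup>2 + 2 * (indicator (A k) \<omega> * S k \<omega> * D \<omega>) + indicator (A k) \<omega> * (D \<omega>)\<^sup>2)"
        by (intro Bochner_Integration.integral_cong refl) (simp add: D_def power2_eq_square algebra_simps)
      also have "\<dots> = expectation (\<lambda>\<omega>. indicator (A k) \<omega> * (S k \<omega>)\<^sup>2) + 2 * expectation (\<lambda>\<omega>. indicator (A k) \<omega> * S k \<omega> * D \<omega>)
           + expectation (\<lambda>\<omega>. indicator (A k) \<omega> * (D \<omega>)\<^sup>2)"
        using intA[of k k] iX iD by simp
      also have "\<dots> \<ge> expectation (\<lambda>\<omega>. indicator (A k) \<omega> * (S k \<omega>)\<^sup>2)"
      proof -
        have "expectation (\<lambda>\<omega>. indicator (A k) \<omega> * (D \<omega>)\<^sup>2) \<ge> 0" by (intro integral_nonneg_AE) auto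
        then show ?thesis using o by simp
      qed
      finally show ?thesis .
    qed
    finally show ?thesis .
  qed
  have sub: "{\<omega>\<in>space M. \<exists>k\<le>m. \<bar>S k \<omega>\<bar> \<ge> lam} \<subseteq> (\<Union>k\<in>{..m}. A k)"
  proof
    fix \<omega> assume "\<omega> \<in> {\<omega>\<in>space M. \<exists>k\<le>m. \<bar>S k \<omega>\<bar> \<ge> lam}"
    then obtain k where k: "\<omega> \<in> space M" "k \<le> m" "\<bar>S k \<omega>\<bar> \<ge> lam" by auto
    define k0 where "k0 = (LEAST k. \<bar>S k \<omega>\<bar> \<ge> lam)"
    have "\<bar>S k0 \<omega>\<bar> \<ge> lam" unfolding k0_def by (rule LeastI[of _ k]) (rule k(3))
    moreover have "k0 \<le> k" unfolding k0_def by (rule Least_le) (rule k(3))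
    moreover have "\<forall>j<k0. \<bar>S j \<omega>\<bar> < lam" unfolding k0_def using not_less_Least by force
    ultimately show "\<omega> \<in> (\<Union>k\<in>{..m}. A k)" using k unfolding A_def by auto
  qed
  have "lam\<^sup>2 * prob {\<omega>\<in>space M. \<exists>k\<le>m. \<bar>S k \<omega>\<bar> \<ge> lam} \<le> lam\<^sup>2 * prob (\<Union>k\<in>{..m}. A k)"
    using sub Ae by (intro mult_left_mono finite_measure_mono) auto
  also have "\<dots> \<le> lam\<^sup>2 * (\<Sum>k\<le>m. prob (A k))"
    using Ae by (intro mult_left_mono measure_UNION_le) auto
  also have "\<dots> = (\<Sum>k\<le>m. lam\<^sup>2 * prob (A k))" by (simp add: sum_distrib_left)
  also have "\<dots> \<le> (\<Sum>k\<le>m. expectation (\<lambda>\<omega>. indicator (A k) \<omega> * (S m \<omega>)\<^sup>2))"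
    by (intro sum_mono step) auto
  also have "\<dots> = expectation (\<lambda>\<omega>. (\<Sum>k\<le>m. indicator (A k) \<omega>) * (S m \<omega>)\<^sup>2)"
    by (subst Bochner_Integration.integral_sum[symmetric]) (auto simp: intA sum_distrib_right)
  also have "\<dots> \<le> expectation (\<lambda>\<omega>. (S m \<omega>)\<^sup>2)"
  proof (rule integral_mono)
    show "integrable M (\<lambda>\<omega>. (\<Sum>k\<le>m. indicator (A k) \<omega>) * (S m \<omega>)\<^sup>2)"
      unfolding sum_distrib_right by (rule Bochner_Integration.integrable_sum) (rule intA)
    show "integrable M (\<lambda>\<omega>. (S m \<omega>)\<^sup>2)" by (rule intS2)
    fix \<omega> show "(\<Sum>k\<le>m. indicator (A k) \<omega>) * (S m \<omega>)\<^sup>2 \<le> (S m \<omega>)\<^sup>2"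
      using ind_le[of \<omega>] by (intro mult_left_le_one_le) (auto intro: sum_nonneg)
  qed
  also have "\<dots> \<le> real m" by (rule ES2)
  finally show ?thesis using lam by (simp add: field_simps)
qed

lemma S_walk: "S k \<omega> = real_of_int (walk X \<omega> k) - \<upsilon> * real k"
  by (simp add: S_def Z_def R_def walk_def sum_subtractf)

lemma main:
  fixes a :: "nat \<Rightarrow> real"
  assumes T: "0 \<le> T" and alim: "(\<lambda>n. sqrt (real n) / a n) \<longlonglongrightarrow> 0" and e: "\<epsilon> > 0"
  shows "(\<lambda>n. prob {\<omega>\<in>space M. (SUP t\<in>{0..T}. \<bar>\<Sum>j\<in>{2..nat \<lfloor>real n * t\<rfloor>}. chi_minus \<beta> (walk X \<omega>) j / a n\<bar>) > \<epsilon>}) \<longlonglongrightarrow> 0"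
    (is "?f \<longlonglongrightarrow> 0")
proof (rule LIMSEQ_I)
  fix \<gamma> :: real assume g: "\<gamma> > 0"
  obtain J0 where J0: "\<forall>J\<ge>J0. norm (\<delta> J - 0) < \<gamma> / 12"
    using LIMSEQ_D[OF \<delta>_lim, of "\<gamma>/12"] g by auto
  define J where "J = max 1 J0"
  have J1: "J \<ge> 1" by (simp add: J_def)
  have dJ: "4 * \<delta> J < \<gamma> / 3" using J0[rule_format, of J] by (simp add: J_def)
  have d0: "\<delta> J \<ge> 0" using xq by (simp add: \<delta>_def)
  define q where "q = p^(2*J)"
  have q: "0 < q" using p by (simp add: q_def)
  define c where "c = nat \<lceil>4*(T+1)/q\<rceil>"
  have cge: "real c \<ge> 4*(T+1)/q" unfolding c_def by linarith
  have c1: "c \<ge> 1"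
  proof -
    have "4*(T+1)/q > 0" using T q by simp
    then show ?thesis unfolding c_def by linarith
  qed
  define Ln where "Ln n = c * (n+1)" for n
  define K where "K = 16 * real J * real c / \<epsilon>\<^sup>2"
  define gs where "gs n = 4 / (real (Ln n) * q) + K * (sqrt (real n) / a n)\<^sup>2" for n
  have gs_lim: "gs \<longlonglongrightarrow> 0"
  proof -
    have "(\<lambda>n. (4 / (real c * q)) * inverse (real (Suc n))) \<longlonglongrightarrow> (4 / (real c * q)) * 0"
      by (intro tendsto_mult tendsto_const LIMSEQ_inverse_real_of_nat)
    moreover have "(\<lambda>n. K * (sqrt (real n) / a n)\<^sup>2) \<longlonglongrightarrow> K * 0\<^sup>2"
      by (intro tendsto_intros alim)
    ultimately have "(\<lambda>n. (4 / (real c * q)) * inverse (real (Suc n)) + K * (sqrt (real n) / a n)\<^sup>2) \<longlonglongrightarrow> (4 / (real c * q)) * 0 + K * 0\<^sup>2"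
      by (rule tendsto_add)
    moreover have "(4 / (real c * q)) * inverse (real (Suc n)) = 4 / (real (Ln n) * q)" for n
      by (simp add: Ln_def field_simps)
    ultimately show ?thesis unfolding gs_def[abs_def] by simp
  qed
  obtain N1 where N1: "\<forall>n\<ge>N1. norm (gs n - 0) < \<gamma> / 2"
    using LIMSEQ_D[OF gs_lim, of "\<gamma>/2"] g by auto
  have gs0: "gs n \<ge> 0" for n using q K_def unfolding gs_def by (simp add: Ln_def K_def)
  have bound: "?f n \<le> 4 * \<delta> J + gs n" if n1: "n \<ge> 1" for n
  proof (cases "a n = 0")
    case True
    have Emp: "{\<omega>\<in>space M. (SUP t\<in>{0..T}. \<bar>\<Sum>j\<in>{2..nat \<lfloor>real n * t\<rfloor>}. chi_minus \<beta> (walk X \<omega>) j / a n\<bar>) > \<epsilon>} = {}"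
      using True T e by simp
    have "0 \<le> 4 * \<delta> J + gs n" using d0 gs0[of n] by simp
    then show ?thesis unfolding Emp by simp
  next
    case False
    have L1: "Ln n \<ge> 1" using c1 by (simp add: Ln_def)
    obtain E' where E': "E' \<in> events"
      "{\<omega>\<in>space M. real (card {m\<in>{1..2*J*Ln n}. is_regen (walk X \<omega>) m}) \<le> real (Ln n) * q / 4} \<subseteq> E'"
      "prob E' \<le> 4 / (real (Ln n) * q) + 4 * \<delta> J"
      using count_bound[OF J1 L1] unfolding q_def by blast
    define lam where "lam = \<epsilon> * \<bar>a n\<bar> / 2"
    have lam: "lam > 0" using e False by (simp add: lam_def)
    define Ks where "Ks = {\<omega>\<in>space M. \<exists>k\<le>2*J*Ln n. \<bar>S k \<omega>\<bar> \<ge> lam}"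
    have Kse: "Ks \<in> events" unfolding Ks_def by measurable
    have Ksb: "prob Ks \<le> K * (sqrt (real n) / a n)\<^sup>2"
    proof -
      have "prob Ks \<le> real (2*J*Ln n) / lam\<^sup>2" unfolding Ks_def by (rule kolmogorov[OF lam])
      also have "\<dots> = 8 * real J * real c * (real n + 1) / (\<epsilon>\<^sup>2 * (a n)\<^sup>2)"
        by (simp add: lam_def Ln_def power2_eq_square field_simps)
      also have "\<dots> \<le> 8 * real J * real c * (2 * real n) / (\<epsilon>\<^sup>2 * (a n)\<^sup>2)"
        using n1 e False by (intro divide_right_mono mult_left_mono) auto
      also have "\<dots> = K * (sqrt (real n) / a n)\<^sup>2"
        by (simp add: K_def power_divide field_simps)
      finally show ?thesis .
    qed
    have sub: "{\<omega>\<in>space M. (SUP t\<in>{0..T}. \<bar>\<Sum>j\<in>{2..nat \<lfloor>real n * t\<rfloor>}. chi_minus \<beta> (walk X \<omega>) j / a n\<bar>) > \<epsilon>} \<subseteq> E' \<union> Ks"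
    proof (rule subsetI, rule ccontr)
      fix \<omega> assume w: "\<omega> \<in> {\<omega>\<in>space M. (SUP t\<in>{0..T}. \<bar>\<Sum>j\<in>{2..nat \<lfloor>real n * t\<rfloor>}. chi_minus \<beta> (walk X \<omega>) j / a n\<bar>) > \<epsilon>}"
        and nw: "\<omega> \<notin> E' \<union> Ks"
      from w have ws: "\<omega> \<in> space M" by auto
      from nw E'(2) ws have cd: "real (card {m\<in>{1..2*J*Ln n}. is_regen (walk X \<omega>) m}) > real (Ln n) * q / 4" by auto
      have "real (Ln n) * q / 4 \<ge> (T+1) * (real n + 1)"
      proof -
        have "real (Ln n) * q / 4 = real c * q / 4 * (real n + 1)" by (simp add: Ln_def algebra_simps)
        moreover have "real c * q / 4 \<ge> T + 1" using cge q by (simp add: field_simps)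
        moreover have "(T+1)*(real n+1) \<le> real c * q / 4 * (real n + 1)"
          using \<open>real c * q / 4 \<ge> T + 1\<close> by (intro mult_right_mono) auto
        ultimately show ?thesis by linarith
      qed
      moreover have "real (nat \<lfloor>real n * T\<rfloor>) \<le> (T+1) * (real n + 1)"
      proof -
        have nT: "0 \<le> real n * T" using T by simp
        then have "0 \<le> \<lfloor>real n * T\<rfloor>" by simp
        then have "real (nat \<lfloor>real n * T\<rfloor>) = real_of_int \<lfloor>real n * T\<rfloor>" by simp
        also have "\<dots> \<le> real n * T" by (rule of_int_floor_le)
        finally have "real (nat \<lfloor>real n * T\<rfloor>) \<le> real n * T" .
        moreover have "real n * T \<le> (T+1) * (real n + 1)" using T by (simp add: algebra_simps)
        ultimately show ?thesis by linarith
      qed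
      ultimately have "nat \<lfloor>real n * T\<rfloor> \<le> card {m\<in>{1..2*J*Ln n}. is_regen (walk X \<omega>) m}"
        using cd by linarith
      moreover have "\<forall>m\<le>2*J*Ln n. \<bar>real_of_int (walk X \<omega> m) - \<upsilon> * real m\<bar> < \<epsilon> * \<bar>a n\<bar> / 2"
      proof (intro allI impI)
        fix m assume "m \<le> 2*J*Ln n"
        then have "\<not> \<bar>S m \<omega>\<bar> \<ge> lam" using nw ws unfolding Ks_def by auto
        then show "\<bar>real_of_int (walk X \<omega> m) - \<upsilon> * real m\<bar> < \<epsilon> * \<bar>a n\<bar> / 2"
          by (simp add: S_walk lam_def)
      qed
      ultimately have "(SUP t\<in>{0..T}. \<bar>\<Sum>j\<in>{2..nat \<lfloor>real n * t\<rfloor>}. chi_minus \<beta> (walk X \<omega>) j / a n\<bar>) \<le> \<epsilon>"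
        using False T e by (intro pathwise) auto
      with w show False by auto
    qed
    have "?f n \<le> prob (E' \<union> Ks)" by (rule measure_le_super[OF sub]) (use E' Kse in auto)
    also have "\<dots> \<le> prob E' + prob Ks" using E' Kse by (intro measure_Un_le) auto
    also have "\<dots> \<le> 4 * \<delta> J + gs n" using E'(3) Ksb by (simp add: gs_def)
    finally show ?thesis .
  qed
  show "\<exists>no. \<forall>n\<ge>no. norm (?f n - 0) < \<gamma>"
  proof (intro exI allI impI)
    fix n assume "n \<ge> max N1 1"
    then have "?f n \<le> 4 * \<delta> J + gs n" "gs n < \<gamma> / 2" using bound N1 by auto
    moreover have "4 * \<delta> J + gs n < \<gamma>" using dJ g \<open>gs n < \<gamma> / 2\<close> by linarith
    ultimately have "?f n < \<gamma>" by (meson le_less_trans)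
    moreover have "?f n \<ge> 0" by simp
    ultimately show "norm (?f n - 0) < \<gamma>" by simp
  qed
qed

end

theorem lemma2:
  fixes M :: "'a measure" and X :: "nat \<Rightarrow> 'a \<Rightarrow> int"
    and \<beta> T :: real and a :: "nat \<Rightarrow> real"
  assumes "prob_space M"
    and meas: "\<And>k. X k \<in> measurable M (count_space UNIV)"
    and indep: "prob_space.indep_vars M (\<lambda>_. count_space UNIV) X UNIV"
    and up: "\<And>k. measure M {\<omega> \<in> space M. X k \<omega> = 1} = \<beta> / (\<beta> + 1)"
    and down: "\<And>k. measure M {\<omega> \<in> space M. X k \<omega> = -1} = 1 / (\<beta> + 1)"
    and "\<beta> > 1" and "0 \<le> T"
    and "(\<lambda>n. sqrt (real n) / a n) \<longlonglongrightarrow> 0"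
  shows "\<forall>\<epsilon>>0. (\<lambda>n. measure M {\<omega> \<in> space M.
            (SUP t\<in>{0..T}. \<bar>\<Sum>j\<in>{2..nat \<lfloor>real n * t\<rfloor>}.
                chi_minus \<beta> (walk X \<omega>) j / a n\<bar>) > \<epsilon>}) \<longlonglongrightarrow> 0"
proof -
  interpret rwalk M X \<beta>
    using assms by (simp add: rwalk_def rwalk_axioms_def)
  show ?thesis using main[OF assms(7) assms(8)] by blast
qed

end
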